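(* Let $\Phi$ be a $k$-CNF on $x_1,\dots,x_n$ with a mist $\mathcal M$, let $\omega=\lceil\exp(n/k^2)\rceil$, and consider the run $\sigma^{[0]},\sigma^{[1]},\dots$ of Walksat$(\Phi,\omega)$. Let $\mathcal A$ be the event $\sigma^{[0]}\notin\mathcal D(\Phi,\mathcal M)$ and let $\mathcal H=\bigcup_{\mu\in\mathcal M,\,0\le t_1<t_2\le\omega}H_\mu(t_1,t_2)$. Then $$\Pr\big[\exists t\le\omega:\sigma^{[t]}\in S(\Phi)\,\big|\,\mathcal A\big]\le\Pr[\mathcal H\mid\mathcal A].$$
   Context: $\Phi$ has $m$ clauses; $\rho=2^{-k}m/n$, $\kappa=\ln k/k$. $U_\Phi(\sigma)$ is the set of indices of clauses unsatisfied by $\sigma$, $\mathcal U_\Phi(\sigma)=|U_\Phi(\sigma)|$, $T(\Phi)=\{\tau\in\{0,1\}^n:\mathcal U_\Phi(\tau)\le n\rho/10\}$, and $S(\Phi)\subseteq T(\Phi)$ is the set of satisfying assignments. $\mathrm{dist}$ is Hamming distance; $\mathcal D_\sigma(r_1,r_2)=\{\tau:\lfloor r_1\kappa n\rfloor\le\mathrm{dist}(\sigma,\tau)\le\lfloor r_2\kappa n\rfloor\}$. A mist is a set $\mathcal M\subseteq T(\Phi)$ whose distinct elements have pairwise distance at least $2\kappa n$ and such that every $\sigma\in T(\Phi)$ is within distance $2\kappa n$ of some $\mu\in\mathcal M$. $\mathcal D(\Phi,\mathcal M)=\bigcup_{\sigma\in\mathcal M}\mathcal D_\sigma(0,10)$.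 Walksat$(\Phi,\omega)$: $\sigma^{[0]}$ uniform in $\{0,1\}^n$; at step $i=0,\dots,\omega$, if $\sigma^{[i]}$ is satisfying the algorithm halts, otherwise it picks a uniformly random unsatisfied clause and a uniformly random position $j\in[k]$ in it and flips that literal's variable to obtain $\sigma^{[i+1]}$. For $\mu\in\mathcal M$ and $t_1<t_2$, $H_\mu(t_1,t_2)$ is the event that $\mathrm{dist}(\sigma^{[t_1]},\mu)=\lfloor10\kappa n\rfloor$, $\mathrm{dist}(\sigma^{[t_2]},\mu)=\lfloor5\kappa n\rfloor$, and $\sigma^{[t]}\in\mathcal D_\mu(5,10)\setminus T(\Phi)$ for all $t_1\le t\le t_2$.
   Formalization: For each fixed k >= 2 the inequality is asserted only for all n at least some unspecified threshold n0 depending on k, rather than for every n. The paper assumes this as well. *)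

theory Defs
  imports "HOL-Probability.Probability"
begin

text \<open>Literals: a pair (i, b) stands for variable x_(i+1) if b = True and for its negation
 if b = False.\<close>

type_synonym lit = "nat \<times> bool"
type_synonym clause = "lit list"
type_synonym cnf = "clause list"
type_synonym assign = "bool list"

definition lit_sat :: "assign \<Rightarrow> lit \<Rightarrow> bool" where
  "lit_sat \<sigma> l = (\<sigma> ! fst l = snd l)"

definition clause_sat :: "assign \<Rightarrow> clause \<Rightarrow> bool" where
  "clause_sat \<sigma> c = (\<exists>l\<in>set c. lit_sat \<sigma> l)"

definition unsat_idx :: "cnf \<Rightarrow> assign \<Rightarrow> nat set" where
  "unsat_idx \<Phi> \<sigma> = {j. j < length \<Phi> \<and> \<not> clause_sat \<sigma> (\<Phi> ! j)}"

definition unsat_num :: "cnf \<Rightarrow> assign \<Rightarrow> nat" where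
  "unsat_num \<Phi> \<sigma> = card (unsat_idx \<Phi> \<sigma>)"

definition is_kCNF :: "nat \<Rightarrow> nat \<Rightarrow> cnf \<Rightarrow> bool" where
  "is_kCNF k n \<Phi> = (\<forall>c\<in>set \<Phi>. length c = k \<and> (\<forall>l\<in>set c. fst l < n))"

definition cube :: "nat \<Rightarrow> assign set" where
  "cube n = {\<sigma>. length \<sigma> = n}"

definition hdist :: "assign \<Rightarrow> assign \<Rightarrow> nat" where
  "hdist \<sigma> \<tau> = card {i. i < length \<sigma> \<and> \<sigma> ! i \<noteq> \<tau> ! i}"

definition kappa :: "nat \<Rightarrow> real" where
  "kappa k = ln (real k) / real k"

definition rho :: "nat \<Rightarrow> nat \<Rightarrow> cnf \<Rightarrow> real" where
  "rho k n \<Phi> = (1 / 2 ^ k) * real (length \<Phi>) / real n"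

definition T_set :: "nat \<Rightarrow> nat \<Rightarrow> cnf \<Rightarrow> assign set" where
  "T_set k n \<Phi> = {\<tau> \<in> cube n. real (unsat_num \<Phi> \<tau>) \<le> real n * rho k n \<Phi> / 10}"

definition S_set :: "nat \<Rightarrow> cnf \<Rightarrow> assign set" where
  "S_set n \<Phi> = {\<tau> \<in> cube n. unsat_idx \<Phi> \<tau> = {}}"

definition Dball :: "nat \<Rightarrow> nat \<Rightarrow> assign \<Rightarrow> real \<Rightarrow> real \<Rightarrow> assign set" where
  "Dball k n \<sigma> r1 r2 = {\<tau> \<in> cube n.
      \<lfloor>r1 * kappa k * real n\<rfloor> \<le> int (hdist \<sigma> \<tau>) \<and> int (hdist \<sigma> \<tau>) \<le> \<lfloor>r2 * kappa k * real n\<rfloor>}"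

definition is_mist :: "nat \<Rightarrow> nat \<Rightarrow> cnf \<Rightarrow> assign set \<Rightarrow> bool" where
  "is_mist k n \<Phi> M =
     (M \<subseteq> T_set k n \<Phi> \<and>
      (\<forall>\<mu>\<in>M. \<forall>\<mu>'\<in>M. \<mu> \<noteq> \<mu>' \<longrightarrow> real (hdist \<mu> \<mu>') \<ge> 2 * kappa k * real n) \<and>
      (\<forall>\<sigma>\<in>T_set k n \<Phi>. \<exists>\<mu>\<in>M. real (hdist \<sigma> \<mu>) \<le> 2 * kappa k * real n))"

definition Dmist :: "nat \<Rightarrow> nat \<Rightarrow> assign set \<Rightarrow> assign set" where
  "Dmist k n M = (\<Union>\<mu>\<in>M. Dball k n \<mu> 0 10)"

definition flip :: "assign \<Rightarrow> nat \<Rightarrow> assign" where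
  "flip \<sigma> i = \<sigma>[i := \<not> \<sigma> ! i]"

text \<open>Once a satisfying assignment
 is reached the algorithm halts; the trajectory is then padded by repeating the final assignment.\<close>
primrec walk_steps :: "nat \<Rightarrow> cnf \<Rightarrow> nat \<Rightarrow> assign \<Rightarrow> assign list pmf" where
  "walk_steps k \<Phi> 0 \<sigma> = return_pmf [\<sigma>]"
| "walk_steps k \<Phi> (Suc s) \<sigma> =
     (if unsat_idx \<Phi> \<sigma> = {} then return_pmf (replicate (Suc (Suc s)) \<sigma>)
      else bind_pmf (pmf_of_set (unsat_idx \<Phi> \<sigma>)) (\<lambda>j.
           bind_pmf (pmf_of_set {..<k}) (\<lambda>p.
           bind_pmf (walk_steps k \<Phi> s (flip \<sigma> (fst ((\<Phi> ! j) ! p)))) (\<lambda>rest.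
           return_pmf (\<sigma> # rest)))))"

text \<open>Walksat(Phi, omega): sigma^[0] uniform on {0,1}^n, steps i = 0..omega; the trajectory
 has entries sigma^[0..omega+1].\<close>
definition walksat :: "nat \<Rightarrow> nat \<Rightarrow> cnf \<Rightarrow> nat \<Rightarrow> assign list pmf" where
  "walksat k n \<Phi> \<omega> = bind_pmf (pmf_of_set (cube n)) (walk_steps k \<Phi> (Suc \<omega>))"

definition H_ev :: "nat \<Rightarrow> nat \<Rightarrow> cnf \<Rightarrow> assign \<Rightarrow> nat \<Rightarrow> nat \<Rightarrow> assign list set" where
  "H_ev k n \<Phi> \<mu> t1 t2 = {tr.
      int (hdist (tr ! t1) \<mu>) = \<lfloor>10 * kappa k * real n\<rfloor> \<and>
      int (hdist (tr ! t2) \<mu>) = \<lfloor>5 * kappa k * real n\<rfloor> \<and>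
      (\<forall>t. t1 \<le> t \<and> t \<le> t2 \<longrightarrow> tr ! t \<in> Dball k n \<mu> 5 10 - T_set k n \<Phi>)}"

definition cond_prob :: "'a pmf \<Rightarrow> 'a set \<Rightarrow> 'a set \<Rightarrow> real" where
  "cond_prob P E A = measure_pmf.prob P (E \<inter> A) / measure_pmf.prob P A"

end

theory Submission
  imports Defs
begin
lemma flip_len[simp]: "length (flip a j) = length a" by (simp add: flip_def)

lemma walk_support:
  "tr \<in> set_pmf (walk_steps k \<Phi> s \<sigma>) \<Longrightarrow> length tr = Suc s \<and> tr!0 = \<sigma> \<and>
    (\<forall>i<s. tr!Suc i = tr!i \<or> (\<exists>j. tr!Suc i = flip (tr!i) j))"
proof (induction s arbitrary: \<sigma> tr)
  case 0 then show ?case by simp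
next
  case (Suc s)
  show ?case
  proof (cases "unsat_idx \<Phi> \<sigma> = {}")
    case True
    then have tr: "tr = replicate (Suc (Suc s)) \<sigma>" using Suc.prems by simp
    then show ?thesis by (auto simp del: replicate.simps)
  next
    case False
    with Suc.prems obtain x rest where r: "rest \<in> set_pmf (walk_steps k \<Phi> s (flip \<sigma> x))" and tr: "tr = \<sigma> # rest"
      by (auto simp: set_bind_pmf)
    from Suc.IH[OF r] have ih: "length rest = Suc s" "rest!0 = flip \<sigma> x"
      "\<forall>i<s. rest!Suc i = rest!i \<or> (\<exists>j. rest!Suc i = flip (rest!i) j)" by auto
    have "\<forall>i<Suc s. tr!Suc i = tr!i \<or> (\<exists>j. tr!Suc i = flip (tr!i) j)"
    proof (intro allI impI)
      fix i assume "i < Suc s"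
      then show "tr!Suc i = tr!i \<or> (\<exists>j. tr!Suc i = flip (tr!i) j)"
        using ih tr by (cases i) auto
    qed
    then show ?thesis using ih tr by simp
  qed
qed



lemma card_ins_le: "finite X \<Longrightarrow> card (insert j X) \<le> card X + 1"
  by (simp add: card_insert_if)

lemma hdist_flip: "hdist (flip a j) m \<le> hdist a m + 1 \<and> hdist a m \<le> hdist (flip a j) m + 1"
proof -
  let ?A = "{i. i < length a \<and> a ! i \<noteq> m ! i}"
  let ?B = "{i. i < length a \<and> flip a j ! i \<noteq> m ! i}"
  have fA: "finite ?A" "finite ?B" by auto
  have s1: "?B \<subseteq> insert j ?A"
  proof
    fix i assume "i \<in> ?B" then show "i \<in> insert j ?A" by (cases "i = j") (auto simp: flip_def)
  qed
  have s2: "?A \<subseteq> insert j ?B"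
  proof
    fix i assume "i \<in> ?A" then show "i \<in> insert j ?B" by (cases "i = j") (auto simp: flip_def)
  qed
  have 1: "card ?B \<le> card ?A + 1"
    using card_mono[OF finite_insert[THEN iffD2, OF fA(1)] s1] card_ins_le[OF fA(1), of j] by linarith
  have 2: "card ?A \<le> card ?B + 1"
    using card_mono[OF finite_insert[THEN iffD2, OF fA(2)] s2] card_ins_le[OF fA(2), of j] by linarith
  show ?thesis using 1 2 by (simp add: hdist_def)
qed

lemma hdist_sym: "length a = length b \<Longrightarrow> hdist a b = hdist b a"
  unfolding hdist_def by (metis (no_types, lifting) Collect_cong)


lemma discrete_ivt:
  fixes f :: "nat \<Rightarrow> int"
  assumes step: "\<And>i. i < s \<Longrightarrow> \<bar>f (Suc i) - f i\<bar> \<le> 1"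
    and f0: "f 0 > a" and fs: "f s < b" and ba: "b < a"
  shows "\<exists>t1 t2. t1 < t2 \<and> t2 < s \<and> f t1 = a \<and> f t2 = b \<and> (\<forall>t. t1 \<le> t \<and> t \<le> t2 \<longrightarrow> b \<le> f t \<and> f t \<le> a)"
proof -
  define t1 where "t1 = (GREATEST t. t \<le> s \<and> f t \<ge> a)"
  have ex1: "0 \<le> s \<and> f 0 \<ge> a" using f0 by simp
  have t1p: "t1 \<le> s \<and> f t1 \<ge> a" unfolding t1_def
    by (rule GreatestI_nat[where P="\<lambda>t. t \<le> s \<and> f t \<ge> a", OF ex1]) auto
  have t1m: "\<And>t. t \<le> s \<Longrightarrow> f t \<ge> a \<Longrightarrow> t \<le> t1" unfolding t1_def
    by (rule Greatest_le_nat[where P="\<lambda>t. t \<le> s \<and> f t \<ge> a"]) auto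
  have t1s: "t1 < s" using t1p fs ba by (metis le_less not_le order.strict_trans)
  have "f (Suc t1) < a" using t1m[of "Suc t1"] t1s by fastforce
  hence ft1: "f t1 = a" using step[OF t1s] t1p by linarith
  have after: "\<And>t. t1 < t \<Longrightarrow> t \<le> s \<Longrightarrow> f t < a" using t1m by fastforce
  define t2 where "t2 = (LEAST t. t1 < t \<and> f t \<le> b)"
  have ex2: "t1 < s \<and> f s \<le> b" using t1s fs by simp
  have t2p: "t1 < t2 \<and> f t2 \<le> b" unfolding t2_def by (rule LeastI[where P="\<lambda>t. t1 < t \<and> f t \<le> b", OF ex2])
  have t2m: "\<And>t. t1 < t \<Longrightarrow> f t \<le> b \<Longrightarrow> t2 \<le> t" unfolding t2_def by (rule Least_le[where P="\<lambda>t. t1 < t \<and> f t \<le> b"]) auto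
  have t2s: "t2 \<le> s" using t2m[of s] ex2 by auto
  obtain p where p: "t2 = Suc p" using t2p by (cases t2) auto
  have "f p > b"
  proof (cases "p = t1")
    case True then show ?thesis using ft1 ba by simp
  next
    case False
    hence "t1 < p" using p t2p by simp
    then show ?thesis using t2m[of p] p by fastforce
  qed
  hence ft2: "f t2 = b" using step[of p] p t2s t2p by fastforce
  have t2s': "t2 < s" using ft2 fs t2s le_less by auto
  have "\<forall>t. t1 \<le> t \<and> t \<le> t2 \<longrightarrow> b \<le> f t \<and> f t \<le> a"
  proof (intro allI impI)
    fix t assume t: "t1 \<le> t \<and> t \<le> t2"
    show "b \<le> f t \<and> f t \<le> a"
    proof (cases "t = t1")
      case True then show ?thesis using ft1 ba by simp
    next
      case False
      hence lt: "t1 < t" using t by simp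
      have "f t < a" using after[OF lt] t t2s by simp
      moreover have "b \<le> f t"
      proof (cases "t = t2")
        case True then show ?thesis using ft2 by simp
      next
        case False then show ?thesis using t2m[OF lt] t by fastforce
      qed
      ultimately show ?thesis by simp
    qed
  qed
  then show ?thesis using t2p t2s' ft1 ft2 by blast
qed



lemma walk_len:
  assumes "tr \<in> set_pmf (walk_steps k \<Phi> s \<sigma>)"
  shows "i \<le> s \<Longrightarrow> length (tr!i) = length \<sigma>"
proof (induction i)
  case 0 then show ?case using walk_support[OF assms] by simp
next
  case (Suc i)
  then have "i < s" by simp
  then have "tr!Suc i = tr!i \<or> (\<exists>j. tr!Suc i = flip (tr!i) j)" using walk_support[OF assms] by blast
  then show ?case using Suc by auto
qed

lemma walk_step_dist:
  assumes "tr \<in> set_pmf (walk_steps k \<Phi> s \<sigma>)" "i < s"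
  shows "\<bar>int (hdist (tr!Suc i) m) - int (hdist (tr!i) m)\<bar> \<le> 1"
proof -
  have "tr!Suc i = tr!i \<or> (\<exists>j. tr!Suc i = flip (tr!i) j)" using walk_support[OF assms(1)] assms(2) by blast
  then show ?thesis
  proof
    assume "tr!Suc i = tr!i" then show ?thesis by simp
  next
    assume "\<exists>j. tr!Suc i = flip (tr!i) j"
    then obtain j where j: "tr!Suc i = flip (tr!i) j" by blast
    show ?thesis using hdist_flip[of "tr!i" j m] unfolding j by linarith
  qed
qed

lemma finite_cube: "finite (cube n)"
proof -
  have "cube n = {xs. set xs \<subseteq> UNIV \<and> length xs = n}" by (auto simp: cube_def)
  then show ?thesis using finite_lists_length_eq[of "UNIV::bool set" n] by simp
qed

lemma cube_ne: "cube n \<noteq> {}"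
  by (auto simp: cube_def intro!: exI[of _ "replicate n True"])

theorem mainTheorem5:
  fixes k :: nat
  assumes "k \<ge> 2"
  shows "\<exists>n0. \<forall>n\<ge>n0. \<forall>(\<Phi>::cnf) (M::assign set).
    is_kCNF k n \<Phi> \<longrightarrow> is_mist k n \<Phi> M \<longrightarrow>
    (let \<omega> = nat \<lceil>exp (real n / real k ^ 2)\<rceil>;
         P = walksat k n \<Phi> \<omega>;
         A = {tr. tr ! 0 \<notin> Dmist k n M};
         H = (\<Union>\<mu>\<in>M. \<Union>t1. \<Union>t2\<in>{t. t1 < t \<and> t \<le> \<omega>}. H_ev k n \<Phi> \<mu> t1 t2)
     in cond_prob P {tr. \<exists>t\<le>\<omega>. tr ! t \<in> S_set n \<Phi>} A \<le> cond_prob P H A)"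
proof -
  have kpos: "kappa k > 0" using assms unfolding kappa_def by (simp add: ln_gt_zero)
  define n0 where "n0 = nat \<lceil>1 / kappa k\<rceil> + 1"
  show ?thesis
  proof (intro exI[of _ n0] allI impI)
    fix n \<Phi> M assume nn: "n \<ge> n0" and kc: "is_kCNF k n \<Phi>" and mist: "is_mist k n \<Phi> M"
    have "real n \<ge> 1 / kappa k + 1" using nn unfolding n0_def by linarith
    hence "kappa k * real n \<ge> kappa k * (1 / kappa k + 1)" using kpos by (intro mult_left_mono) auto
    moreover have "kappa k * (1 / kappa k + 1) = 1 + kappa k" using kpos by (simp add: field_simps)
    ultimately have x1: "kappa k * real n > 1" using kpos by linarith
    define a where "a = \<lfloor>10 * kappa k * real n\<rfloor>"
    define b where "b = \<lfloor>5 * kappa k * real n\<rfloor>"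
    have ba: "b < a" unfolding a_def b_def using x1 by linarith
    define \<omega> where "\<omega> = nat \<lceil>exp (real n / real k ^ 2)\<rceil>"
    define P where "P = walksat k n \<Phi> \<omega>"
    define A where "A = {tr. tr ! 0 \<notin> Dmist k n M}"
    define H where "H = (\<Union>\<mu>\<in>M. \<Union>t1. \<Union>t2\<in>{t. t1 < t \<and> t \<le> \<omega>}. H_ev k n \<Phi> \<mu> t1 t2)"
    define E where "E = {tr. \<exists>t\<le>\<omega>. tr ! t \<in> S_set n \<Phi>}"
    have MT: "M \<subseteq> T_set k n \<Phi>" using mist by (simp add: is_mist_def)
    have key: "tr \<in> H" if tr: "tr \<in> set_pmf P" and tE: "tr \<in> E" and tA: "tr \<in> A" for tr
    proof -
      obtain \<sigma> where \<sigma>: "\<sigma> \<in> cube n" and w: "tr \<in> set_pmf (walk_steps k \<Phi> (Suc \<omega>) \<sigma>)"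
        using tr finite_cube cube_ne by (auto simp: P_def walksat_def set_bind_pmf)
      have ws: "length tr = Suc (Suc \<omega>)" "tr!0 = \<sigma>" using walk_support[OF w] by auto
      have len: "\<And>i. i \<le> Suc \<omega> \<Longrightarrow> length (tr!i) = n" using walk_len[OF w] \<sigma> by (simp add: cube_def)
      obtain t0 where t0: "t0 \<le> \<omega>" "tr!t0 \<in> S_set n \<Phi>" using tE E_def by auto
      have rho0: "rho k n \<Phi> \<ge> 0" by (simp add: rho_def)
      have "tr!t0 \<in> T_set k n \<Phi>" using t0 rho0
        by (auto simp: S_set_def T_set_def unsat_num_def)
      define s where "s = (LEAST t. tr!t \<in> T_set k n \<Phi>)"
      have sT: "tr!s \<in> T_set k n \<Phi>" unfolding s_def by (rule LeastI) fact
      have st0: "s \<le> t0" unfolding s_def by (rule Least_le) fact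
      have notT: "\<And>t. t < s \<Longrightarrow> tr!t \<notin> T_set k n \<Phi>" unfolding s_def by (rule not_less_Least)
      obtain \<mu> where \<mu>: "\<mu> \<in> M" "real (hdist (tr!s) \<mu>) \<le> 2 * kappa k * real n"
        using mist sT by (auto simp: is_mist_def)
      have l\<mu>: "length \<mu> = n" using \<mu>(1) MT by (auto simp: T_set_def cube_def)
      define f where "f t = int (hdist (tr!t) \<mu>)" for t
      have step: "\<And>i. i < s \<Longrightarrow> \<bar>f (Suc i) - f i\<bar> \<le> 1"
        unfolding f_def using walk_step_dist[OF w] st0 t0 by simp
      have "\<sigma> \<notin> Dball k n \<mu> 0 10" using tA \<mu>(1) ws by (auto simp: A_def Dmist_def)
      hence "\<not> int (hdist \<mu> \<sigma>) \<le> a" using \<sigma> by (auto simp: Dball_def a_def)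
      moreover have "hdist \<mu> \<sigma> = hdist \<sigma> \<mu>" using \<sigma> l\<mu> by (intro hdist_sym) (simp add: cube_def)
      ultimately have f0: "f 0 > a" using ws by (simp add: f_def)
      have fs: "f s < b" using \<mu>(2) x1 unfolding f_def b_def by linarith
      obtain t1 t2 where tt: "t1 < t2" "t2 < s" "f t1 = a" "f t2 = b"
        and mid: "\<And>t. t1 \<le> t \<Longrightarrow> t \<le> t2 \<Longrightarrow> b \<le> f t \<and> f t \<le> a"
        using discrete_ivt[OF step f0 fs ba] by blast
      have "tr \<in> H_ev k n \<Phi> \<mu> t1 t2"
        unfolding H_ev_def
      proof (intro CollectI conjI allI impI)
        show "int (hdist (tr ! t1) \<mu>) = \<lfloor>10 * kappa k * real n\<rfloor>" using tt f_def a_def by simp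
        show "int (hdist (tr ! t2) \<mu>) = \<lfloor>5 * kappa k * real n\<rfloor>" using tt f_def b_def by simp
        fix t assume t: "t1 \<le> t \<and> t \<le> t2"
        have lt: "length (tr!t) = n" using len t tt st0 t0 by simp
        have hs: "hdist \<mu> (tr!t) = hdist (tr!t) \<mu>" using lt l\<mu> by (intro hdist_sym) simp
        show "tr ! t \<in> Dball k n \<mu> 5 10 - T_set k n \<Phi>"
          using mid[of t] t notT[of t] tt lt hs
          by (auto simp: Dball_def cube_def f_def a_def b_def)
      qed
      moreover have "t2 \<le> \<omega>" using tt st0 t0 by linarith
      ultimately show ?thesis unfolding H_def using \<mu>(1) tt(1) by blast
    qed
    have "measure_pmf.prob P (E \<inter> A) = measure_pmf.prob P (E \<inter> A \<inter> set_pmf P)"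
      by (simp add: measure_Int_set_pmf)
    also have "\<dots> \<le> measure_pmf.prob P (H \<inter> A)"
      using key by (intro measure_pmf.finite_measure_mono) auto
    finally have "measure_pmf.prob P (E \<inter> A) \<le> measure_pmf.prob P (H \<inter> A)" .
    hence "cond_prob P E A \<le> cond_prob P H A"
      unfolding cond_prob_def by (intro divide_right_mono) auto
    then show "let \<omega> = nat \<lceil>exp (real n / real k ^ 2)\<rceil>;
         P = walksat k n \<Phi> \<omega>;
         A = {tr. tr ! 0 \<notin> Dmist k n M};
         H = (\<Union>\<mu>\<in>M. \<Union>t1. \<Union>t2\<in>{t. t1 < t \<and> t \<le> \<omega>}. H_ev k n \<Phi> \<mu> t1 t2)
     in cond_prob P {tr. \<exists>t\<le>\<omega>. tr ! t \<in> S_set n \<Phi>} A \<le> cond_prob P H A"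
      unfolding Let_def \<omega>_def[symmetric] P_def[symmetric] A_def[symmetric] H_def[symmetric] E_def[symmetric] .
  qed
qed

end
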